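(* Let $d \ge 2$. For $R \subseteq \{0,1,\dots,d-1\}$ let $\mathrm{err}(R) = \min_{m \in \mathcal{M}_d(R)} \| m - \textsc{max} \|_\infty$, where $\|\cdot\|_\infty$ is the sup norm of a function over the unit cube $[0,1]^d$ and $\textsc{max}(x)=\max_i x_i$. Then $$\mathrm{err}(\{d-1\}) = \frac{1}{2d-1},\qquad \mathrm{err}(\{0, d-1\}) = \frac{1}{2d},\qquad \mathrm{err}(\{0,1,2,\dots,d-1\}) \le \frac{1}{2^d}.$$
   Context: For $x\in\mathbb{R}^d$ and nonempty $A\subseteq\{1,\dots,d\}$, the subpool max is $s(x;A)=\max\{x_j:j\in A\}$. $C(k,r,d)$ denotes the $k$-th $r$-element subset of $\{1,\dots,d\}$ in lexicographic order, $k=1,\dots,\binom{d}{r}$. For $R\subseteq\{0,1,\dots,d-1\}$, $\mathcal{M}_d(R)$ is the set of functions $$x \mapsto \beta_0 + \sum_{r\in R\setminus\{0\}} \sum_{j=1}^{\binom{d}{r}} \beta_r^j\, s(x; C(j,r,d)), \qquad \beta_0,\beta_r^j\in\mathbb{R},$$ where the intercept $\beta_0$ is included if $0\in R$ and omitted (i.e. $\beta_0=0$) if $0\notin R$. *)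

theory Defs
  imports Complex_Main
begin

text \<open>Points of R^d are functions nat => real; only coordinates 1..d matter.\<close>

definition subpool_max :: "(nat \<Rightarrow> real) \<Rightarrow> nat set \<Rightarrow> real" where
  "subpool_max x A = Max (x ` A)"

definition max_fn :: "nat \<Rightarrow> (nat \<Rightarrow> real) \<Rightarrow> real" where
  "max_fn d x = Max (x ` {1..d})"

text \<open>The r-element subsets of {1..d}; indexing them by the subset itself is
  the same as indexing by their lexicographic rank C(j,r,d).\<close>
definition rsubsets :: "nat \<Rightarrow> nat \<Rightarrow> nat set set" where
  "rsubsets r d = {A. A \<subseteq> {1..d} \<and> card A = r}"

definition model :: "nat \<Rightarrow> nat set \<Rightarrow> real \<Rightarrow> (nat set \<Rightarrow> real) \<Rightarrow> (nat \<Rightarrow> real) \<Rightarrow> real" where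
  "model d R b0 b x = (if 0 \<in> R then b0 else 0)
      + (\<Sum>r\<in>R - {0}. \<Sum>A\<in>rsubsets r d. b A * subpool_max x A)"

definition models :: "nat \<Rightarrow> nat set \<Rightarrow> ((nat \<Rightarrow> real) \<Rightarrow> real) set" where
  "models d R = {model d R b0 b | b0 b. True}"

definition unit_cube :: "nat \<Rightarrow> (nat \<Rightarrow> real) set" where
  "unit_cube d = {x. \<forall>j\<in>{1..d}. 0 \<le> x j \<and> x j \<le> 1}"

definition sup_norm :: "nat \<Rightarrow> ((nat \<Rightarrow> real) \<Rightarrow> real) \<Rightarrow> real" where
  "sup_norm d f = Sup ((\<lambda>x. \<bar>f x\<bar>) ` unit_cube d)"

definition err :: "nat \<Rightarrow> nat set \<Rightarrow> real" where
  "err d R = Inf ((\<lambda>m. sup_norm d (\<lambda>x. m x - max_fn d x)) ` models d R)"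

end

theory Submission
  imports Defs
begin


lemma rsubsets_finite: "finite (rsubsets r d)"
  unfolding rsubsets_def
  by (rule finite_subset[of _ "Pow {1..d}"]) auto

lemma rsubsets_mem:
  assumes "A \<in> rsubsets r d" "r \<ge> 1"
  shows "A \<noteq> {}" "finite A" "A \<subseteq> {1..d}" "card A = r"
  using assms unfolding rsubsets_def by (auto intro: finite_subset)

lemma smax_bounds:
  assumes "A \<noteq> {}" "A \<subseteq> {1..d}" "x \<in> unit_cube d"
  shows "0 \<le> subpool_max x A" "subpool_max x A \<le> 1"
proof -
  have fin: "finite A" using assms(2) finite_subset by blast
  obtain j where j: "j \<in> A" using assms(1) by blast
  have "x j \<le> subpool_max x A" unfolding subpool_max_def using fin j by (auto intro: Max_ge)
  moreover have "0 \<le> x j" using assms j unfolding unit_cube_def by auto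
  ultimately show "0 \<le> subpool_max x A" by linarith
  have "subpool_max x A \<in> x ` A" unfolding subpool_max_def using fin assms(1) by (auto intro: Max_in)
  then show "subpool_max x A \<le> 1" using assms unfolding unit_cube_def by auto
qed

lemma max_fn_smax: "max_fn d x = subpool_max x {1..d}"
  by (simp add: max_fn_def subpool_max_def)

lemma model_err_bound:
  assumes x: "x \<in> unit_cube d" and d: "d \<ge> 1"
  shows "\<bar>model d R b0 b x - max_fn d x\<bar> \<le> \<bar>b0\<bar> + (\<Sum>r\<in>R-{0}. \<Sum>A\<in>rsubsets r d. \<bar>b A\<bar>) + 1"
proof -
  have "\<bar>\<Sum>r\<in>R-{0}. \<Sum>A\<in>rsubsets r d. b A * subpool_max x A\<bar>
      \<le> (\<Sum>r\<in>R-{0}. \<bar>\<Sum>A\<in>rsubsets r d. b A * subpool_max x A\<bar>)" by (rule sum_abs)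
  also have "\<dots> \<le> (\<Sum>r\<in>R-{0}. \<Sum>A\<in>rsubsets r d. \<bar>b A\<bar>)"
  proof (rule sum_mono)
    fix r assume r: "r \<in> R - {0}"
    have "\<bar>\<Sum>A\<in>rsubsets r d. b A * subpool_max x A\<bar> \<le> (\<Sum>A\<in>rsubsets r d. \<bar>b A * subpool_max x A\<bar>)"
      by (rule sum_abs)
    also have "\<dots> \<le> (\<Sum>A\<in>rsubsets r d. \<bar>b A\<bar>)"
    proof (rule sum_mono)
      fix A assume A: "A \<in> rsubsets r d"
      have r1: "r \<ge> 1" using r by auto
      have "0 \<le> subpool_max x A" "subpool_max x A \<le> 1"
        using smax_bounds[OF rsubsets_mem(1,3)[OF A r1] x] by auto
      then show "\<bar>b A * subpool_max x A\<bar> \<le> \<bar>b A\<bar>"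
        by (simp add: abs_mult mult_left_le)
    qed
    finally show "\<bar>\<Sum>A\<in>rsubsets r d. b A * subpool_max x A\<bar> \<le> (\<Sum>A\<in>rsubsets r d. \<bar>b A\<bar>)" .
  qed
  finally have 1: "\<bar>\<Sum>r\<in>R-{0}. \<Sum>A\<in>rsubsets r d. b A * subpool_max x A\<bar> \<le> (\<Sum>r\<in>R-{0}. \<Sum>A\<in>rsubsets r d. \<bar>b A\<bar>)" .
  have "{1..d} \<noteq> {}" using d by auto
  then have 2: "0 \<le> max_fn d x" "max_fn d x \<le> 1" unfolding max_fn_smax
    using smax_bounds[OF _ _ x] by auto
  have 3: "\<bar>if 0 \<in> R then b0 else 0\<bar> \<le> \<bar>b0\<bar>" by auto
  show ?thesis unfolding model_def using 1 2 3 by linarith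
qed

lemma cube_ne: "(\<lambda>_. 0) \<in> unit_cube d" by (simp add: unit_cube_def)

lemma sup_norm_upper:
  assumes "\<forall>x\<in>unit_cube d. \<bar>f x\<bar> \<le> B" "x \<in> unit_cube d"
  shows "\<bar>f x\<bar> \<le> sup_norm d f"
  unfolding sup_norm_def
  by (rule cSup_upper) (use assms in \<open>auto intro: bdd_aboveI2[where M=B]\<close>)

lemma sup_norm_least:
  assumes "\<forall>x\<in>unit_cube d. \<bar>f x\<bar> \<le> v"
  shows "sup_norm d f \<le> v"
  unfolding sup_norm_def
  by (rule cSup_least) (use assms cube_ne in auto)

lemma model_sup_upper:
  assumes "x \<in> unit_cube d" "d \<ge> 1"
  shows "\<bar>model d R b0 b x - max_fn d x\<bar> \<le> sup_norm d (\<lambda>x. model d R b0 b x - max_fn d x)"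
  by (rule sup_norm_upper[OF _ assms(1)]) (use model_err_bound assms(2) in blast)

lemma model_sup_nonneg:
  assumes "d \<ge> 1"
  shows "0 \<le> sup_norm d (\<lambda>x. model d R b0 b x - max_fn d x)"
  using model_sup_upper[OF cube_ne assms, of R b0 b] by linarith

definition upd :: "(nat \<Rightarrow> real) \<Rightarrow> real \<Rightarrow> real \<Rightarrow> nat \<Rightarrow> real" where
  "upd x t s = (\<lambda>j. if x j = t then s else x j)"

lemma upd_same: "upd x t t = x" by (auto simp: upd_def)

lemma smax_upd:
  assumes ne: "A \<noteq> {}" and fin: "finite A" and as: "a \<le> s" "s \<le> b" and at: "a < t" "t < b"
    and sep: "\<forall>j\<in>A. x j \<noteq> t \<longrightarrow> x j \<le> a \<or> b \<le> x j"
  shows "subpool_max (upd x t s) A = (if (\<exists>j\<in>A. x j = t) \<and> (\<forall>j\<in>A. x j \<le> t) then s else subpool_max x A)"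
proof (cases "(\<exists>j\<in>A. x j = t) \<and> (\<forall>j\<in>A. x j \<le> t)")
  case True
  then obtain j0 where j0: "j0 \<in> A" "x j0 = t" by blast
  have "Max (upd x t s ` A) = s"
  proof (rule Max_eqI)
    show "finite (upd x t s ` A)" using fin by simp
    show "s \<in> upd x t s ` A" using j0 by (auto simp: upd_def intro!: image_eqI[of _ _ j0])
    fix y assume "y \<in> upd x t s ` A"
    then obtain j where j: "j \<in> A" "y = upd x t s j" by blast
    show "y \<le> s"
    proof (cases "x j = t")
      case True then show ?thesis using j by (simp add: upd_def)
    next
      case False
      then have "x j \<le> a \<or> b \<le> x j" using sep j by auto
      moreover have "x j \<le> t" using True j by auto
      ultimately show ?thesis using j False at as by (auto simp: upd_def)
    qed
  qed
  then show ?thesis using True by (simp add: subpool_max_def)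
next
  case False
  note nc = this
  show ?thesis
  proof (cases "\<exists>j\<in>A. x j = t")
    case False
    then have "upd x t s ` A = x ` A" by (auto simp: upd_def)
    then show ?thesis by (subst if_not_P[OF nc]) (simp add: subpool_max_def)
  next
    case True
    with \<open>\<not> ((\<exists>j\<in>A. x j = t) \<and> (\<forall>j\<in>A. x j \<le> t))\<close> obtain j1 where j1: "j1 \<in> A" "x j1 > t" by force
    have "b \<le> x j1" using sep j1 at by force
    define M where "M = Max (x ` A)"
    have "M \<in> x ` A" unfolding M_def using fin ne by (auto intro: Max_in)
    then obtain jm where jm: "jm \<in> A" "x jm = M" by blast
    have Mge: "\<And>j. j \<in> A \<Longrightarrow> x j \<le> M" unfolding M_def using fin by auto
    have "M > t" using Mge[OF j1(1)] j1 by linarith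
    have "Max (upd x t s ` A) = M"
    proof (rule Max_eqI)
      show "finite (upd x t s ` A)" using fin by simp
      show "M \<in> upd x t s ` A" using jm \<open>M > t\<close> by (auto simp: upd_def intro!: image_eqI[of _ _ jm])
      fix y assume "y \<in> upd x t s ` A"
      then obtain j where j: "j \<in> A" "y = upd x t s j" by blast
      show "y \<le> M"
        using j Mge[OF j(1)] Mge[OF j1(1)] \<open>b \<le> x j1\<close> as by (auto simp: upd_def)
    qed
    then show ?thesis by (subst if_not_P[OF nc]) (simp add: subpool_max_def M_def)
  qed
qed

lemma smax_interp:
  assumes ne: "A \<noteq> {}" and fin: "finite A" and at: "a < t" "t < b"
    and sep: "\<forall>j\<in>A. x j \<noteq> t \<longrightarrow> x j \<le> a \<or> b \<le> x j"
  shows "subpool_max x A = (b - t) / (b - a) * subpool_max (upd x t a) A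
           + (1 - (b - t) / (b - a)) * subpool_max (upd x t b) A"
proof -
  have e1: "subpool_max (upd x t a) A = (if (\<exists>j\<in>A. x j = t) \<and> (\<forall>j\<in>A. x j \<le> t) then a else subpool_max x A)"
    by (rule smax_upd) (use assms in auto)
  have e2: "subpool_max (upd x t b) A = (if (\<exists>j\<in>A. x j = t) \<and> (\<forall>j\<in>A. x j \<le> t) then b else subpool_max x A)"
    by (rule smax_upd) (use assms in auto)
  have e3: "subpool_max x A = (if (\<exists>j\<in>A. x j = t) \<and> (\<forall>j\<in>A. x j \<le> t) then t else subpool_max x A)"
    using smax_upd[OF ne fin _ _ at sep, of t] at upd_same[of x t] by auto
  define l where "l = (b - t) / (b - a)"
  have h: "l * (b - a) = b - t" using at by (simp add: l_def)
  have "l * a + (1 - l) * b = b - l * (b - a)"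
    by (simp add: algebra_simps)
  then have key: "t = (b - t) / (b - a) * a + (1 - (b - t) / (b - a)) * b"
    using h unfolding l_def by linarith
  show ?thesis
  proof (cases "(\<exists>j\<in>A. x j = t) \<and> (\<forall>j\<in>A. x j \<le> t)")
    case True
    then show ?thesis using e1 e2 e3 key by simp
  next
    case False
    have e1': "subpool_max (upd x t a) A = subpool_max x A" using e1 by (simp only: if_not_P[OF False])
    have e2': "subpool_max (upd x t b) A = subpool_max x A" using e2 by (simp only: if_not_P[OF False])
    show ?thesis unfolding e1' e2' by (simp add: algebra_simps)
  qed
qed



lemma model_interp:
  assumes d: "d \<ge> 1" and at: "a < t" "t < b"
    and sep: "\<forall>j\<in>{1..d}. x j \<noteq> t \<longrightarrow> x j \<le> a \<or> b \<le> x j"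
  defines "l \<equiv> (b - t) / (b - a)"
  shows "model d R c0 bb x - max_fn d x
     = l * (model d R c0 bb (upd x t a) - max_fn d (upd x t a))
       + (1 - l) * (model d R c0 bb (upd x t b) - max_fn d (upd x t b))"
proof -
  have I: "subpool_max x A = l * subpool_max (upd x t a) A + (1 - l) * subpool_max (upd x t b) A"
    if "A \<noteq> {}" "A \<subseteq> {1..d}" for A
    unfolding l_def
    by (rule smax_interp) (use that at sep finite_subset in auto)
  have S: "(\<Sum>r\<in>R-{0}. \<Sum>A\<in>rsubsets r d. bb A * subpool_max x A)
     = (\<Sum>r\<in>R-{0}. \<Sum>A\<in>rsubsets r d. l * (bb A * subpool_max (upd x t a) A) + (1 - l) * (bb A * subpool_max (upd x t b) A))"
  proof (intro sum.cong refl)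
    fix r A assume r: "r \<in> R - {0}" and A: "A \<in> rsubsets r d"
    have r1: "r \<ge> 1" using r by auto
    show "bb A * subpool_max x A = l * (bb A * subpool_max (upd x t a) A) + (1 - l) * (bb A * subpool_max (upd x t b) A)"
      by (simp only: I[OF rsubsets_mem(1,3)[OF A r1]]) (simp add: algebra_simps)
  qed
  also have "\<dots> = l * (\<Sum>r\<in>R-{0}. \<Sum>A\<in>rsubsets r d. bb A * subpool_max (upd x t a) A)
      + (1 - l) * (\<Sum>r\<in>R-{0}. \<Sum>A\<in>rsubsets r d. bb A * subpool_max (upd x t b) A)"
    by (simp add: sum.distrib sum_distrib_left)
  finally have S' : "(\<Sum>r\<in>R-{0}. \<Sum>A\<in>rsubsets r d. bb A * subpool_max x A) = \<dots>" .
  have M: "max_fn d x = l * max_fn d (upd x t a) + (1 - l) * max_fn d (upd x t b)"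
    unfolding max_fn_smax using I[of "{1..d}"] d by auto
  show ?thesis unfolding model_def S' M by (simp add: algebra_simps)
qed

lemma vertex_reduction:
  fixes E :: "(nat \<Rightarrow> real) \<Rightarrow> real"
  assumes lin: "\<And>x t a b. x \<in> unit_cube d \<Longrightarrow> a < t \<Longrightarrow> t < b \<Longrightarrow>
      (\<forall>j\<in>{1..d}. x j \<noteq> t \<longrightarrow> x j \<le> a \<or> b \<le> x j) \<Longrightarrow>
      E x = (b - t) / (b - a) * E (upd x t a) + (1 - (b - t) / (b - a)) * E (upd x t b)"
    and vert: "\<And>y. y \<in> unit_cube d \<Longrightarrow> (\<forall>j\<in>{1..d}. y j = 0 \<or> y j = 1) \<Longrightarrow> \<bar>E y\<bar> \<le> \<epsilon>"
    and x0: "x0 \<in> unit_cube d"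
  shows "\<bar>E x0\<bar> \<le> \<epsilon>"
proof -
  have main: "\<forall>x. x \<in> unit_cube d \<and> card (x ` {1..d} - {0,1}) = n \<longrightarrow> \<bar>E x\<bar> \<le> \<epsilon>" for n
  proof (induction n rule: less_induct)
    case (less n)
    show ?case
    proof (intro allI impI, elim conjE)
      fix x assume x: "x \<in> unit_cube d" and n: "card (x ` {1..d} - {0,1}) = n"
      define V where "V = x ` {1..d} - {0,1}"
      have finV: "finite V" by (simp add: V_def)
      have xc: "\<And>j. j \<in> {1..d} \<Longrightarrow> 0 \<le> x j \<and> x j \<le> 1" using x by (auto simp: unit_cube_def)
      show "\<bar>E x\<bar> \<le> \<epsilon>"
      proof (cases "V = {}")
        case True
        then have "\<forall>j\<in>{1..d}. x j = 0 \<or> x j = 1" by (auto simp: V_def)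
        then show ?thesis using vert x by blast
      next
        case False
        then obtain t where t: "t \<in> V" by blast
        then obtain jt where jt: "jt \<in> {1..d}" "x jt = t" "t \<noteq> 0" "t \<noteq> 1" by (auto simp: V_def)
        have t01: "0 < t" "t < 1" using xc[OF jt(1)] jt by auto
        define L where "L = insert 0 {v \<in> x ` {1..d}. v < t}"
        define U where "U = insert 1 {v \<in> x ` {1..d}. t < v}"
        define a where "a = Max L"
        define b where "b = Min U"
        have finL: "finite L" "finite U" by (auto simp: L_def U_def)
        have aL: "a \<in> L" unfolding a_def by (rule Max_in) (use finL in \<open>auto simp: L_def\<close>)
        have bU: "b \<in> U" unfolding b_def by (rule Min_in) (use finL in \<open>auto simp: U_def\<close>)
        have at: "a < t" using aL t01 by (auto simp: L_def)
        have tb: "t < b" using bU t01 by (auto simp: U_def)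
        have a0: "0 \<le> a" unfolding a_def by (rule Max_ge) (use finL in \<open>auto simp: L_def\<close>)
        have b1: "b \<le> 1" unfolding b_def by (rule Min_le) (use finL in \<open>auto simp: U_def\<close>)
        have sep: "\<forall>j\<in>{1..d}. x j \<noteq> t \<longrightarrow> x j \<le> a \<or> b \<le> x j"
        proof (intro ballI impI)
          fix j assume j: "j \<in> {1..d}" "x j \<noteq> t"
          show "x j \<le> a \<or> b \<le> x j"
          proof (cases "x j < t")
            case True
            then have "x j \<in> L" using j by (auto simp: L_def)
            then show ?thesis unfolding a_def using finL by auto
          next
            case False
            then have "x j \<in> U" using j by (auto simp: U_def)
            then show ?thesis unfolding b_def using finL by auto
          qed
        qed
        have sub: "upd x t s ` {1..d} - {0,1} \<subset> V" if s: "s \<in> L \<union> U" "s \<noteq> t" for s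
        proof
          have "s = 0 \<or> s = 1 \<or> s \<in> x ` {1..d}" using s by (auto simp: L_def U_def)
          then show "upd x t s ` {1..d} - {0,1} \<subseteq> V" by (auto simp: V_def upd_def)
          have "t \<notin> upd x t s ` {1..d} - {0,1}" using s by (auto simp: upd_def)
          then show "upd x t s ` {1..d} - {0,1} \<noteq> V" using t by auto
        qed
        have cube: "upd x t s \<in> unit_cube d" if "0 \<le> s" "s \<le> 1" for s
          using xc that by (auto simp: unit_cube_def upd_def)
        have Ea: "\<bar>E (upd x t a)\<bar> \<le> \<epsilon>"
        proof -
          have "card (upd x t a ` {1..d} - {0,1}) < n"
            using psubset_card_mono[OF finV sub[of a]] aL at n by (auto simp: V_def)
          then show ?thesis using less.IH cube a0 at t01 by auto
        qed
        have Eb: "\<bar>E (upd x t b)\<bar> \<le> \<epsilon>"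
        proof -
          have "card (upd x t b ` {1..d} - {0,1}) < n"
            using psubset_card_mono[OF finV sub[of b]] bU tb n by (auto simp: V_def)
          then show ?thesis using less.IH cube b1 tb t01 by auto
        qed
        define l where "l = (b - t) / (b - a)"
        have l01: "0 \<le> l" "l \<le> 1" using at tb by (auto simp: l_def divide_simps)
        have Ex: "E x = l * E (upd x t a) + (1 - l) * E (upd x t b)"
          unfolding l_def by (rule lin[OF x at tb sep])
        have "\<bar>E x\<bar> \<le> l * \<bar>E (upd x t a)\<bar> + (1 - l) * \<bar>E (upd x t b)\<bar>"
          unfolding Ex using l01 by (metis abs_triangle_ineq abs_mult abs_of_nonneg diff_ge_0_iff_ge)
        also have "\<dots> \<le> l * \<epsilon> + (1 - l) * \<epsilon>"
          using l01 Ea Eb by (intro add_mono mult_left_mono) auto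
        finally show ?thesis by (simp add: algebra_simps)
      qed
    qed
  qed
  show ?thesis using main x0 by blast
qed



lemma smax_vertex:
  assumes "A \<noteq> {}" "finite A" "\<forall>j\<in>A. y j = 0 \<or> y j = 1"
  shows "subpool_max y A = (if \<exists>j\<in>A. y j = 1 then 1 else 0)"
  unfolding subpool_max_def
proof (rule Max_eqI)
  show "finite (y ` A)" using assms by simp
  show "\<And>z. z \<in> y ` A \<Longrightarrow> z \<le> (if \<exists>j\<in>A. y j = 1 then 1 else 0)" using assms by auto
  show "(if \<exists>j\<in>A. y j = 1 then 1 else 0) \<in> y ` A" using assms by (auto simp: image_iff)
qed

definition supp1 :: "nat \<Rightarrow> (nat \<Rightarrow> real) \<Rightarrow> nat set" where
  "supp1 d y = {j \<in> {1..d}. y j = 1}"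

lemma sum_vertex:
  assumes vy: "\<forall>j\<in>{1..d}. y j = 0 \<or> y j = 1" and r: "r \<ge> 1"
  shows "(\<Sum>A\<in>rsubsets r d. bb A * subpool_max y A) = (\<Sum>A\<in>{A\<in>rsubsets r d. A \<inter> supp1 d y \<noteq> {}}. bb A)"
proof -
  have "(\<Sum>A\<in>rsubsets r d. bb A * subpool_max y A) = (\<Sum>A\<in>rsubsets r d. if A \<inter> supp1 d y \<noteq> {} then bb A else 0)"
  proof (intro sum.cong refl)
    fix A assume A: "A \<in> rsubsets r d"
    note m = rsubsets_mem[OF A r]
    have "subpool_max y A = (if \<exists>j\<in>A. y j = 1 then 1 else 0)"
      by (rule smax_vertex) (use m vy in auto)
    moreover have "(\<exists>j\<in>A. y j = 1) \<longleftrightarrow> A \<inter> supp1 d y \<noteq> {}" using m(3) unfolding supp1_def by blast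
    ultimately show "bb A * subpool_max y A = (if A \<inter> supp1 d y \<noteq> {} then bb A else 0)" by simp
  qed
  also have "\<dots> = (\<Sum>A\<in>{A\<in>rsubsets r d. A \<inter> supp1 d y \<noteq> {}}. bb A)"
    by (simp add: sum.inter_filter[OF rsubsets_finite])
  finally show ?thesis .
qed

lemma card_hit:
  assumes K: "K \<subseteq> {1..d}"
  shows "real (card {A\<in>rsubsets r d. A \<inter> K \<noteq> {}}) = real (d choose r) - real ((d - card K) choose r)"
proof -
  have fK: "finite K" using K finite_subset by blast
  have u: "rsubsets r d = {A\<in>rsubsets r d. A \<inter> K \<noteq> {}} \<union> {A\<in>rsubsets r d. A \<inter> K = {}}" by auto
  have c: "card (rsubsets r d) = card {A\<in>rsubsets r d. A \<inter> K \<noteq> {}} + card {A\<in>rsubsets r d. A \<inter> K = {}}"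
    by (subst u, rule card_Un_disjoint) (use rsubsets_finite in auto)
  have c1: "card (rsubsets r d) = d choose r"
    unfolding rsubsets_def using n_subsets[of "{1..d}" r] by simp
  have e: "{A\<in>rsubsets r d. A \<inter> K = {}} = {B. B \<subseteq> {1..d} - K \<and> card B = r}"
    by (auto simp: rsubsets_def)
  have c2: "card {A\<in>rsubsets r d. A \<inter> K = {}} = (d - card K) choose r"
    unfolding e using n_subsets[of "{1..d} - K" r] K fK by (simp add: card_Diff_subset)
  show ?thesis using c c1 c2 by simp
qed

lemma max_fn_vertex:
  assumes vy: "\<forall>j\<in>{1..d}. y j = 0 \<or> y j = 1" and d: "d \<ge> 1"
  shows "max_fn d y = (if supp1 d y \<noteq> {} then 1 else 0)"
  unfolding max_fn_smax using d vy
  by (subst smax_vertex) (auto simp: supp1_def)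

lemma model_vertex_sym:
  assumes vy: "\<forall>j\<in>{1..d}. y j = 0 \<or> y j = 1"
  shows "model d R c0 (\<lambda>A. \<beta> (card A)) y = (if 0 \<in> R then c0 else 0)
     + (\<Sum>r\<in>R-{0}. \<beta> r * (real (d choose r) - real ((d - card (supp1 d y)) choose r)))"
  unfolding model_def
proof (intro arg_cong2[where f="(+)"] refl sum.cong)
  fix r assume r: "r \<in> R - {0}"
  then have r1: "r \<ge> 1" by auto
  have "(\<Sum>A\<in>rsubsets r d. \<beta> (card A) * subpool_max y A) = (\<Sum>A\<in>{A\<in>rsubsets r d. A \<inter> supp1 d y \<noteq> {}}. \<beta> (card A))"
    by (rule sum_vertex[OF vy r1])
  also have "\<dots> = (\<Sum>A\<in>{A\<in>rsubsets r d. A \<inter> supp1 d y \<noteq> {}}. \<beta> r)"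
    by (intro sum.cong refl) (auto simp: rsubsets_def)
  also have "\<dots> = \<beta> r * real (card {A\<in>rsubsets r d. A \<inter> supp1 d y \<noteq> {}})" by simp
  also have "\<dots> = \<beta> r * (real (d choose r) - real ((d - card (supp1 d y)) choose r))"
    by (subst card_hit) (auto simp: supp1_def)
  finally show "(\<Sum>A\<in>rsubsets r d. \<beta> (card A) * subpool_max y A) = \<beta> r * (real (d choose r) - real ((d - card (supp1 d y)) choose r))" .
qed



lemma sup_from_vertices:
  assumes d: "d \<ge> 1"
    and V: "\<And>y. y \<in> unit_cube d \<Longrightarrow> (\<forall>j\<in>{1..d}. y j = 0 \<or> y j = 1) \<Longrightarrow> \<bar>model d R c0 bb y - max_fn d y\<bar> \<le> \<epsilon>"
  shows "sup_norm d (\<lambda>x. model d R c0 bb x - max_fn d x) \<le> \<epsilon>"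
proof (rule sup_norm_least, intro ballI)
  fix x assume x: "x \<in> unit_cube d"
  show "\<bar>model d R c0 bb x - max_fn d x\<bar> \<le> \<epsilon>"
    by (rule vertex_reduction[where E="\<lambda>x. model d R c0 bb x - max_fn d x", OF _ V x])
       (rule model_interp[OF d], auto)
qed

lemma err_eq:
  assumes lb: "\<And>c0 bb. v \<le> sup_norm d (\<lambda>x. model d R c0 bb x - max_fn d x)"
    and ub: "sup_norm d (\<lambda>x. model d R c0' bb' x - max_fn d x) \<le> v"
  shows "err d R = v"
proof -
  have eq: "sup_norm d (\<lambda>x. model d R c0' bb' x - max_fn d x) = v" using lb[of c0' bb'] ub by linarith
  show ?thesis unfolding err_def
  proof (rule cInf_eq_minimum)
    show "v \<in> (\<lambda>m. sup_norm d (\<lambda>x. m x - max_fn d x)) ` models d R"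
      unfolding models_def using eq[symmetric] by blast
    fix z assume "z \<in> (\<lambda>m. sup_norm d (\<lambda>x. m x - max_fn d x)) ` models d R"
    then show "v \<le> z" unfolding models_def using lb by auto
  qed
qed

lemma err_le:
  assumes d: "d \<ge> 1" and ub: "sup_norm d (\<lambda>x. model d R c0' bb' x - max_fn d x) \<le> v"
  shows "err d R \<le> v"
proof -
  have "err d R \<le> sup_norm d (\<lambda>x. model d R c0' bb' x - max_fn d x)"
    unfolding err_def
  proof (rule cInf_lower)
    show "sup_norm d (\<lambda>x. model d R c0' bb' x - max_fn d x) \<in> (\<lambda>m. sup_norm d (\<lambda>x. m x - max_fn d x)) ` models d R"
      unfolding models_def by blast
    show "bdd_below ((\<lambda>m. sup_norm d (\<lambda>x. m x - max_fn d x)) ` models d R)"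
      unfolding models_def by (rule bdd_belowI2[where m=0]) (use model_sup_nonneg d in auto)
  qed
  then show ?thesis using ub by linarith
qed

lemma supp1_card:
  "finite (supp1 d y)" "card (supp1 d y) \<le> d" "supp1 d y \<noteq> {} \<longleftrightarrow> card (supp1 d y) \<ge> 1"
proof -
  show f: "finite (supp1 d y)" by (simp add: supp1_def)
  have "card (supp1 d y) \<le> card {1..d}" by (rule card_mono) (auto simp: supp1_def)
  then show "card (supp1 d y) \<le> d" by simp
  show "supp1 d y \<noteq> {} \<longleftrightarrow> card (supp1 d y) \<ge> 1" using f card_gt_0_iff[of "supp1 d y"] by linarith
qed

lemma choose_dm1: "d \<ge> 1 \<Longrightarrow> d choose (d - 1) = d"
  using binomial_symmetric[of "d - 1" d] by simp

lemma gval: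
  assumes d: "d \<ge> 2" and k: "k \<le> d"
  shows "real (d choose (d-1)) - real ((d - k) choose (d-1)) = (if k = 0 then 0 else if k = 1 then real d - 1 else real d)"
proof -
  have c: "d choose (d - 1) = d" using d choose_dm1 by simp
  show ?thesis
  proof (cases "k = 0")
    case True then show ?thesis using c by simp
  next
    case False
    show ?thesis
    proof (cases "k = 1")
      case True then show ?thesis using c d by simp
    next
      case False
      then have "d - k < d - 1" using \<open>k \<noteq> 0\<close> k d by auto
      then show ?thesis using c \<open>k \<noteq> 0\<close> False by simp
    qed
  qed
qed



lemma ub12:
  assumes d: "d \<ge> 2" and R: "R - {0} = {d - 1}"
    and vals: "\<And>k. k \<le> d \<Longrightarrow> \<bar>(if 0 \<in> R then c0 else 0) + c * (if k = 0 then 0 else if k = 1 then real d - 1 else real d)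
                 - (if k \<ge> 1 then 1 else 0)\<bar> \<le> \<epsilon>"
  shows "sup_norm d (\<lambda>x. model d R c0 (\<lambda>A. c) x - max_fn d x) \<le> \<epsilon>"
proof -
  have "sup_norm d (\<lambda>x. model d R c0 (\<lambda>A. (\<lambda>_. c) (card A)) x - max_fn d x) \<le> \<epsilon>"
  proof (rule sup_from_vertices)
    show "d \<ge> 1" using d by simp
    fix y assume y: "y \<in> unit_cube d" "\<forall>j\<in>{1..d}. y j = 0 \<or> y j = 1"
    define k where "k = card (supp1 d y)"
    have k: "k \<le> d" "supp1 d y \<noteq> {} \<longleftrightarrow> k \<ge> 1" using supp1_card unfolding k_def by auto
    have m: "model d R c0 (\<lambda>A. (\<lambda>_. c) (card A)) y = (if 0 \<in> R then c0 else 0) + c * (if k = 0 then 0 else if k = 1 then real d - 1 else real d)"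
      using model_vertex_sym[OF y(2), of R c0 "\<lambda>_. c"] gval[OF d k(1)] R by (simp add: k_def[symmetric])
    have mx: "max_fn d y = (if k \<ge> 1 then 1 else 0)"
      using max_fn_vertex[OF y(2)] d k(2) by simp
    show "\<bar>model d R c0 (\<lambda>A. (\<lambda>_. c) (card A)) y - max_fn d y\<bar> \<le> \<epsilon>"
      unfolding m mx using vals[OF k(1)] by simp
  qed
  then show ?thesis by simp
qed

lemma ub1:
  assumes d: "d \<ge> 2"
  shows "sup_norm d (\<lambda>x. model d {d-1} 0 (\<lambda>A. 2 / (2 * real d - 1)) x - max_fn d x) \<le> 1 / (2 * real d - 1)"
proof (rule ub12[OF d])
  show "{d - 1} - {0} = {d - 1}" using d by auto
  fix k :: nat
  have dd: "2 * real d - 1 > 0" using d by simp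
  have "0 \<notin> {d - 1}" using d by auto
  then show "\<bar>(if 0 \<in> {d-1} then 0 else 0) + 2 / (2 * real d - 1) * (if k = 0 then 0 else if k = 1 then real d - 1 else real d)
                 - (if k \<ge> 1 then 1 else 0)\<bar> \<le> 1 / (2 * real d - 1)"
    using dd by (auto simp: field_simps)
qed

lemma ub2:
  assumes d: "d \<ge> 2"
  shows "sup_norm d (\<lambda>x. model d {0, d-1} (1 / (2 * real d)) (\<lambda>A. 1 / real d) x - max_fn d x) \<le> 1 / (2 * real d)"
proof (rule ub12[OF d])
  show "{0, d - 1} - {0} = {d - 1}" using d by auto
  fix k :: nat
  have dd: "real d > 0" using d by simp
  show "\<bar>(if 0 \<in> {0, d-1} then 1 / (2 * real d) else 0) + 1 / real d * (if k = 0 then 0 else if k = 1 then real d - 1 else real d)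
                 - (if k \<ge> 1 then 1 else 0)\<bar> \<le> 1 / (2 * real d)"
    using dd by (auto simp: field_simps)
qed



lemma lower12:
  fixes c0 :: real and bb :: "nat set \<Rightarrow> real"
  assumes d: "d \<ge> 2" and R: "R - {0} = {d - 1}"
  defines "s \<equiv> sup_norm d (\<lambda>x. model d R c0 bb x - max_fn d x)"
  defines "C \<equiv> (if 0 \<in> R then c0 else 0)"
  shows "1 - C \<le> (2 * real d - 1) * s" "\<bar>C\<bar> \<le> s"
proof -
  have d1: "d \<ge> 1" and r1: "d - 1 \<ge> 1" using d by auto
  define rs where "rs = rsubsets (d - 1) d"
  have mv: "model d R c0 bb y = C + (\<Sum>A\<in>{A\<in>rs. A \<inter> supp1 d y \<noteq> {}}. bb A)"
    if "\<forall>j\<in>{1..d}. y j = 0 \<or> y j = 1" for y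
    unfolding model_def R C_def rs_def using sum_vertex[OF that r1] by simp
  have E: "\<bar>model d R c0 bb y - max_fn d y\<bar> \<le> s" if "y \<in> unit_cube d" for y
    unfolding s_def by (rule model_sup_upper[OF that d1])
  define S where "S = (\<Sum>A\<in>rs. bb A)"
  define T where "T i = (\<Sum>A\<in>{A\<in>rs. i \<in> A}. bb A)" for i
  have v0: "\<forall>j\<in>{1..d}. (\<lambda>_. 0::real) j = 0 \<or> (\<lambda>_. 0::real) j = 1" by simp
  have "supp1 d (\<lambda>_. 0) = {}" by (simp add: supp1_def)
  then have m0: "model d R c0 bb (\<lambda>_. 0) = C" using mv[OF v0] by simp
  have mx0: "max_fn d (\<lambda>_. 0) = 0" using max_fn_vertex[OF v0 d1] by (simp add: supp1_def)
  show "\<bar>C\<bar> \<le> s" using E[OF cube_ne] m0 mx0 by simp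
  have v1: "\<forall>j\<in>{1..d}. (\<lambda>_. 1::real) j = 0 \<or> (\<lambda>_. 1::real) j = 1" by simp
  have c1: "(\<lambda>_. 1::real) \<in> unit_cube d" by (simp add: unit_cube_def)
  have su1: "supp1 d (\<lambda>_. 1) = {1..d}" by (auto simp: supp1_def)
  have "{A\<in>rs. A \<inter> {1..d} \<noteq> {}} = rs"
    using rsubsets_mem[OF _ r1] unfolding rs_def by blast
  then have m1: "model d R c0 bb (\<lambda>_. 1) = C + S" using mv[OF v1] su1 by (simp add: S_def)
  have mx1: "max_fn d (\<lambda>_. 1) = 1" using max_fn_vertex[OF v1 d1] su1 d1 by simp
  have I1: "C + S - 1 \<le> s" using E[OF c1] m1 mx1 by simp
  have Ie: "1 - C - T i \<le> s" if i: "i \<in> {1..d}" for i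
  proof -
    define e where "e = (\<lambda>j. if j = i then 1 else (0::real))"
    have ve: "\<forall>j\<in>{1..d}. e j = 0 \<or> e j = 1" by (simp add: e_def)
    have ce: "e \<in> unit_cube d" by (simp add: unit_cube_def e_def)
    have sue: "supp1 d e = {i}" using i by (auto simp: supp1_def e_def)
    have "{A\<in>rs. A \<inter> {i} \<noteq> {}} = {A\<in>rs. i \<in> A}" by auto
    then have me: "model d R c0 bb e = C + T i" using mv[OF ve] sue by (simp add: T_def)
    have mxe: "max_fn d e = 1" using max_fn_vertex[OF ve d1] sue by simp
    show ?thesis using E[OF ce] me mxe by simp
  qed
  have sumT: "(\<Sum>i\<in>{1..d}. T i) = (real d - 1) * S"
  proof -
    have "(\<Sum>i\<in>{1..d}. T i) = (\<Sum>i\<in>{1..d}. \<Sum>A\<in>rs. if i \<in> A then bb A else 0)"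
      unfolding T_def by (simp add: sum.inter_filter rs_def rsubsets_finite)
    also have "\<dots> = (\<Sum>A\<in>rs. \<Sum>i\<in>{1..d}. if i \<in> A then bb A else 0)" by (rule sum.swap)
    also have "\<dots> = (\<Sum>A\<in>rs. (real d - 1) * bb A)"
    proof (intro sum.cong refl)
      fix A assume A: "A \<in> rs"
      note m = rsubsets_mem[OF A[unfolded rs_def] r1]
      have "(\<Sum>i\<in>{1..d}. if i \<in> A then bb A else 0) = (\<Sum>i\<in>{i\<in>{1..d}. i \<in> A}. bb A)"
        by (rule sum.inter_filter[symmetric]) simp
      also have "{i\<in>{1..d}. i \<in> A} = A" using m by auto
      finally show "(\<Sum>i\<in>{1..d}. if i \<in> A then bb A else 0) = (real d - 1) * bb A"
        using m d1 by (simp add: of_nat_diff)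
    qed
    also have "\<dots> = (real d - 1) * S" by (simp add: S_def sum_distrib_left)
    finally show ?thesis .
  qed
  have "(\<Sum>i\<in>{1..d}. 1 - C - T i) \<le> (\<Sum>i\<in>{1..d}. s)" by (rule sum_mono) (use Ie in auto)
  moreover have "(\<Sum>i\<in>{1..d}. 1 - C - T i) = real d * (1 - C) - (\<Sum>i\<in>{1..d}. T i)"
    by (simp add: sum_subtractf)
  ultimately have I2: "real d * (1 - C) - (real d - 1) * S \<le> real d * s"
    unfolding sumT by simp
  have I3: "(real d - 1) * (C + S - 1) \<le> (real d - 1) * s"
    using I1 d by (intro mult_left_mono) auto
  show "1 - C \<le> (2 * real d - 1) * s" using I2 I3 by (simp add: algebra_simps)
qed



lemma binsum:
  assumes n: "n \<le> d" and d: "d \<ge> 1"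
  shows "(\<Sum>r\<in>{1..<d}. (-2::real)^r * real (n choose r)) = (-1)^n - 1 - (if n = d then (-2)^d else 0)"
proof -
  define f where "f k = (-2::real)^k * real (n choose k)" for k
  have b: "(-1::real)^n = (\<Sum>k\<le>n. f k)"
    using binomial_ring[of "-2::real" 1 n] by (simp add: f_def mult.commute)
  also have "\<dots> = (\<Sum>k\<le>d. f k)"
    by (rule sum.mono_neutral_left) (use n in \<open>auto simp: f_def\<close>)
  also have "{..d} = insert 0 (insert d {1..<d})" using d by auto
  also have "(\<Sum>k\<in>insert 0 (insert d {1..<d}). f k) = f 0 + (f d + (\<Sum>k\<in>{1..<d}. f k))"
    using d by (simp add: sum.insert)
  finally have "(-1::real)^n = f 0 + (f d + (\<Sum>k\<in>{1..<d}. f k))" .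
  moreover have "f 0 = 1" by (simp add: f_def)
  moreover have "f d = (if n = d then (-2)^d else 0)" using n by (auto simp: f_def)
  ultimately show ?thesis unfolding f_def by simp
qed

lemma ub3:
  assumes d: "d \<ge> 2"
  defines "\<alpha> \<equiv> (-1::real)^d / 2^d"
  shows "sup_norm d (\<lambda>x. model d {0..<d} (1 / 2^d) (\<lambda>A. - \<alpha> * (-2)^(card A)) x - max_fn d x) \<le> 1 / 2^d"
proof (rule sup_from_vertices)
  show d1: "d \<ge> 1" using d by simp
  fix y assume y: "y \<in> unit_cube d" "\<forall>j\<in>{1..d}. y j = 0 \<or> y j = 1"
  define k where "k = card (supp1 d y)"
  have k: "k \<le> d" "supp1 d y \<noteq> {} \<longleftrightarrow> k \<ge> 1" using supp1_card unfolding k_def by auto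
  have R: "{0..<d} - {0} = {1..<d}" by auto
  have a1: "\<alpha> * (-1)^d = 1 / 2^d"
    unfolding \<alpha>_def by (simp add: power_mult_distrib[symmetric])
  have a2: "\<alpha> * (-2)^d = 1"
  proof -
    have "(-2::real)^d = (-1)^d * 2^d" by (simp add: power_mult_distrib[symmetric])
    then show ?thesis unfolding \<alpha>_def by (simp add: power_mult_distrib[symmetric])
  qed
  have sumeq: "(\<Sum>r\<in>{1..<d}. - \<alpha> * (-2)^r * (real (d choose r) - real ((d - k) choose r)))
      = - \<alpha> * ((\<Sum>r\<in>{1..<d}. (-2::real)^r * real (d choose r)) - (\<Sum>r\<in>{1..<d}. (-2::real)^r * real ((d - k) choose r)))"
  proof -
    have "(\<Sum>r\<in>{1..<d}. - \<alpha> * (-2)^r * (real (d choose r) - real ((d - k) choose r)))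
       = (\<Sum>r\<in>{1..<d}. - \<alpha> * ((-2::real)^r * real (d choose r) - (-2)^r * real ((d - k) choose r)))"
      by (rule sum.cong) (simp_all add: algebra_simps)
    also have "\<dots> = - \<alpha> * (\<Sum>r\<in>{1..<d}. (-2::real)^r * real (d choose r) - (-2)^r * real ((d - k) choose r))"
      by (rule sum_distrib_left[symmetric])
    also have "\<dots> = - \<alpha> * ((\<Sum>r\<in>{1..<d}. (-2::real)^r * real (d choose r)) - (\<Sum>r\<in>{1..<d}. (-2::real)^r * real ((d - k) choose r)))"
      by (simp only: sum_subtractf)
    finally show ?thesis .
  qed
  have m: "model d {0..<d} (1 / 2^d) (\<lambda>A. - \<alpha> * (-2)^(card A)) y
      = 1 / 2^d + (\<Sum>r\<in>{1..<d}. - \<alpha> * (-2)^r * (real (d choose r) - real ((d - k) choose r)))"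
    using model_vertex_sym[OF y(2), of "{0..<d}" "1 / 2^d" "\<lambda>r. - \<alpha> * (-2)^r"] d R
    by (simp add: k_def[symmetric])
  have mx: "max_fn d y = (if k \<ge> 1 then 1 else 0)"
    using max_fn_vertex[OF y(2) d1] k(2) by simp
  show "\<bar>model d {0..<d} (1 / 2^d) (\<lambda>A. - \<alpha> * (-2)^(card A)) y - max_fn d y\<bar> \<le> 1 / 2^d"
  proof (cases "k = 0")
    case True
    then show ?thesis unfolding m mx sumeq by simp
  next
    case False
    have jd: "d - k \<noteq> d" "d - k \<le> d" using False k by auto
    have "model d {0..<d} (1 / 2^d) (\<lambda>A. - \<alpha> * (-2)^(card A)) y - max_fn d y
        = 1 / 2^d - \<alpha> * ((-1)^d - 1 - (-2)^d - ((-1)^(d-k) - 1)) - 1"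
      unfolding m mx sumeq binsum[OF order_refl d1] binsum[OF jd(2) d1] using False jd(1) by simp
    also have "\<dots> = \<alpha> * (-1)^(d-k)"
      using a1 a2 by (simp add: algebra_simps)
    finally show ?thesis unfolding \<alpha>_def by (simp add: abs_mult)
  qed
qed


theorem theorem2:
  fixes d :: nat
  assumes "d \<ge> 2"
  shows "err d {d - 1} = 1 / (2 * real d - 1) \<and>
         err d {0, d - 1} = 1 / (2 * real d) \<and>
         err d {0..<d} \<le> 1 / 2 ^ d"
proof (intro conjI)
  have d: "d \<ge> 2" by (rule assms)
  have dpos: "2 * real d - 1 > 0" "2 * real d > 0" using d by auto
  show "err d {d - 1} = 1 / (2 * real d - 1)"
  proof (rule err_eq[OF _ ub1[OF d]])
    fix c0 bb
    have R: "{d - 1} - {0} = {d - 1}" "0 \<notin> {d - 1}" using d by auto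
    have "1 \<le> (2 * real d - 1) * sup_norm d (\<lambda>x. model d {d - 1} c0 bb x - max_fn d x)"
      using lower12(1)[OF d R(1), of c0 bb] R(2) by simp
    then show "1 / (2 * real d - 1) \<le> sup_norm d (\<lambda>x. model d {d - 1} c0 bb x - max_fn d x)"
      using dpos by (simp add: divide_simps mult.commute)
  qed
  show "err d {0, d - 1} = 1 / (2 * real d)"
  proof (rule err_eq[OF _ ub2[OF d]])
    fix c0 bb
    have R: "{0, d - 1} - {0} = {d - 1}" using d by auto
    have "1 \<le> (2 * real d) * sup_norm d (\<lambda>x. model d {0, d - 1} c0 bb x - max_fn d x)"
      using lower12[OF d R, of c0 bb] by (simp add: algebra_simps)
    then show "1 / (2 * real d) \<le> sup_norm d (\<lambda>x. model d {0, d - 1} c0 bb x - max_fn d x)"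
      using dpos by (simp add: divide_simps mult.commute)
  qed
  show "err d {0..<d} \<le> 1 / 2 ^ d"
    by (rule err_le[OF _ ub3[OF d]]) (use d in simp)
qed

end
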